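(* For $\mu_1,\mu_2\in M_+(\mathbb T)$, the one-dimensional subspace of $\mathcal D(\mu_1,\mu_2)$ spanned by the constant function $1$ is a wandering subspace for the multiplication pair $\mathscr M_z=(\mathscr M_{z_1},\mathscr M_{z_2})$ on $\mathcal D(\mu_1,\mu_2)$.
   Context: $\mathbb D$ is the open unit disc, $\mathbb T$ the unit circle, $\mathcal O(\mathbb D^2)$ the holomorphic functions on $\mathbb D^2$, $M_+(\mathbb T)$ the finite positive Borel measures on $\mathbb T$. Integrals $\int_{\mathbb T}\cdots d\theta$ are over $\theta\in[0,2\pi]$ with respect to $d\theta/2\pi$; $dA$ is normalized area measure on $\mathbb D$; $P_\mu(w)=\int_{\mathbb T}\frac{1-|w|^2}{|w-\zeta|^2}d\mu(\zeta)$. $H^2(\mathbb D^2)$ is the space of $f=\sum a_{m,n}z_1^mz_2^n\in\mathcal O(\mathbb D^2)$ with $\|f\|^2_{H^2}=\sum|a_{m,n}|^2<\infty$. For $f\in\mathcal O(\mathbb D^2)$, $D_{\mu_1,\mu_2}(f)=\sup_{0<r<1}\int_{\mathbb T}\int_{\mathbb D}|\partial_1f(z_1,re^{i\theta})|^2P_{\mu_1}(z_1)dA(z_1)d\theta+\sup_{0<r<1}\int_{\mathbb T}\int_{\mathbb D}|\partial_2f(re^{i\theta},z_2)|^2P_{\mu_2}(z_2)dA(z_2)d\theta$. If $\mu_1=0$ or $\mu_2=0$, $\mathcal D(\mu_1,\mu_2)=\{f\in H^2(\mathbb D^2):D_{\mu_1,\mu_2}(f)<\infty\}$, otherwise $\mathcal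 D(\mu_1,\mu_2)=\{f\in\mathcal O(\mathbb D^2):D_{\mu_1,\mu_2}(f)<\infty\}$; it is a Hilbert space with norm $\|f\|^2=\|f\|^2_{H^2}+D_{\mu_1,\mu_2}(f)$, and $\mathscr M_{z_j}$ is the bounded operator of multiplication by $z_j$ on it. A closed subspace $\mathcal W$ is wandering for a commuting pair $T=(T_1,T_2)$ if $T_1^{\alpha_1}T_2^{\alpha_2}\mathcal W\perp T_1^{\beta_1}T_2^{\beta_2}\mathcal W$ whenever $\alpha,\beta\in\mathbb Z_+^2$ and there is $i\in\{1,2\}$ with $\alpha_i=0$ and $\beta_i\ne0$. *)

theory Defs
  imports "HOL-Analysis.Analysis"
begin

type_synonym fun2 = "complex \<Rightarrow> complex \<Rightarrow> complex"

definition holo_bidisc :: "fun2 \<Rightarrow> bool" where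
  "holo_bidisc f \<longleftrightarrow> (\<forall>z1 z2. cmod z1 < 1 \<longrightarrow> cmod z2 < 1 \<longrightarrow>
     (\<exists>a b. ((\<lambda>p. f (fst p) (snd p)) has_derivative (\<lambda>h. a * fst h + b * snd h)) (at (z1, z2))))"

definition taylor_coeff :: "fun2 \<Rightarrow> nat \<Rightarrow> nat \<Rightarrow> complex" where
  "taylor_coeff f m n =
     (deriv ^^ m) (\<lambda>z. (deriv ^^ n) (\<lambda>w. f z w) 0) 0 / (fact m * fact n)"

definition H2_normsq :: "fun2 \<Rightarrow> ennreal" where
  "H2_normsq f = (\<integral>\<^sup>+ mn. ennreal ((cmod (taylor_coeff f (fst mn) (snd mn)))\<^sup>2) \<partial>count_space UNIV)"

text \<open>Finite positive Borel measures on the unit circle, viewed as measures on the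
  complex plane concentrated on the circle.\<close>
definition circle_measure :: "complex measure \<Rightarrow> bool" where
  "circle_measure \<mu> \<longleftrightarrow> sets \<mu> = sets borel \<and> finite_measure \<mu> \<and> emeasure \<mu> (- sphere 0 1) = 0"

definition poisson :: "complex measure \<Rightarrow> complex \<Rightarrow> ennreal" where
  "poisson \<mu> w = (\<integral>\<^sup>+ \<zeta>. ennreal ((1 - (cmod w)\<^sup>2) / (cmod (w - \<zeta>))\<^sup>2) \<partial>\<mu>)"

definition d1 :: "fun2 \<Rightarrow> fun2" where "d1 f z1 z2 = deriv (\<lambda>z. f z z2) z1"
definition d2 :: "fun2 \<Rightarrow> fun2" where "d2 f z1 z2 = deriv (\<lambda>z. f z1 z) z2"

definition disc_int :: "(complex \<Rightarrow> ennreal) \<Rightarrow> ennreal" where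
  "disc_int g = ennreal (1 / pi) * (\<integral>\<^sup>+ z \<in> ball 0 1. g z \<partial>lborel)"

definition circle_int :: "(real \<Rightarrow> ennreal) \<Rightarrow> ennreal" where
  "circle_int g = ennreal (1 / (2 * pi)) * (\<integral>\<^sup>+ \<theta> \<in> {0..2*pi}. g \<theta> \<partial>lborel)"

definition dirichlet :: "complex measure \<Rightarrow> complex measure \<Rightarrow> fun2 \<Rightarrow> ennreal" where
  "dirichlet \<mu>1 \<mu>2 f =
     (SUP r \<in> {0<..<1::real}. circle_int (\<lambda>\<theta>. disc_int (\<lambda>z1.
         ennreal ((cmod (d1 f z1 (complex_of_real r * cis \<theta>)))\<^sup>2) * poisson \<mu>1 z1)))
   + (SUP r \<in> {0<..<1::real}. circle_int (\<lambda>\<theta>. disc_int (\<lambda>z2.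
         ennreal ((cmod (d2 f (complex_of_real r * cis \<theta>) z2))\<^sup>2) * poisson \<mu>2 z2)))"

definition zero_measure :: "complex measure \<Rightarrow> bool" where
  "zero_measure \<mu> \<longleftrightarrow> emeasure \<mu> (space \<mu>) = 0"

definition Dspace :: "complex measure \<Rightarrow> complex measure \<Rightarrow> fun2 set" where
  "Dspace \<mu>1 \<mu>2 = {f. holo_bidisc f \<and> dirichlet \<mu>1 \<mu>2 f < \<infinity> \<and>
      ((zero_measure \<mu>1 \<or> zero_measure \<mu>2) \<longrightarrow> H2_normsq f < \<infinity>)}"

definition D_normsq :: "complex measure \<Rightarrow> complex measure \<Rightarrow> fun2 \<Rightarrow> real" where
  "D_normsq \<mu>1 \<mu>2 f = enn2real (H2_normsq f + dirichlet \<mu>1 \<mu>2 f)"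

definition D_inner :: "complex measure \<Rightarrow> complex measure \<Rightarrow> fun2 \<Rightarrow> fun2 \<Rightarrow> complex" where
  "D_inner \<mu>1 \<mu>2 f g =
     (\<Sum>k<4::nat. \<i> ^ k * complex_of_real (D_normsq \<mu>1 \<mu>2 (\<lambda>z w. f z w + \<i> ^ k * g z w))) / 4"

definition Mz1 :: "fun2 \<Rightarrow> fun2" where "Mz1 f z1 z2 = z1 * f z1 z2"
definition Mz2 :: "fun2 \<Rightarrow> fun2" where "Mz2 f z1 z2 = z2 * f z1 z2"

definition wandering :: "('a \<Rightarrow> 'a \<Rightarrow> complex) \<Rightarrow> ('a \<Rightarrow> 'a) \<Rightarrow> ('a \<Rightarrow> 'a) \<Rightarrow> 'a set \<Rightarrow> bool" where
  "wandering inn T1 T2 W \<longleftrightarrow>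
     (\<forall>a1 a2 b1 b2 :: nat. ((a1 = 0 \<and> b1 \<noteq> 0) \<or> (a2 = 0 \<and> b2 \<noteq> 0)) \<longrightarrow>
        (\<forall>f\<in>W. \<forall>g\<in>W. inn ((T1 ^^ a1) ((T2 ^^ a2) f)) ((T1 ^^ b1) ((T2 ^^ b2) g)) = 0))"

end

theory Submission
  imports Defs "HOL-Computational_Algebra.Polynomial"
begin


lemma deriv_iter_poly: "(deriv ^^ n) (poly p) = poly ((pderiv ^^ n) p)"
proof (induction n)
  case 0 then show ?case by simp
next
  case (Suc n)
  show ?case
    by (simp add: Suc, rule ext, rule DERIV_imp_deriv, rule poly_DERIV)
qed

lemma coeff_pderiv_iter:
  "coeff ((pderiv ^^ n) p) j = pochhammer (of_nat (Suc j)) n * coeff p (j + n)"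
proof (induction n arbitrary: j)
  case 0 then show ?case by simp
next
  case (Suc n)
  show ?case
    by (simp add: coeff_pderiv Suc pochhammer_rec algebra_simps)
qed

lemma deriv_iter_poly0: "(deriv ^^ n) (poly p) 0 = fact n * coeff p n"
  by (simp add: deriv_iter_poly poly_0_coeff_0 coeff_pderiv_iter pochhammer_fact)

lemma taylor_h:
  "taylor_coeff (\<lambda>z w. z^a1 * (w^a2 * c) + l * (z^b1 * (w^b2 * d))) m n =
     (if m = a1 \<and> n = a2 then c else 0) + (if m = b1 \<and> n = b2 then l * d else 0)"
proof -
  have inner: "(\<lambda>w. z^a1 * (w^a2 * c) + l * (z^b1 * (w^b2 * d))) =
     poly (monom (z^a1 * c) a2 + monom (l * z^b1 * d) b2)" for z
    by (rule ext) (simp add: poly_monom algebra_simps)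
  have inner0: "(deriv ^^ n) (\<lambda>w. z^a1 * (w^a2 * c) + l * (z^b1 * (w^b2 * d))) 0 =
     poly (monom (fact n * (if n = a2 then c else 0)) a1 + monom (fact n * (if n = b2 then l * d else 0)) b1) z" for z
    unfolding inner deriv_iter_poly0 by (simp add: coeff_monom poly_monom algebra_simps)
  show ?thesis
    unfolding taylor_coeff_def inner0 deriv_iter_poly0
    by (auto simp: coeff_monom add_divide_distrib)
qed




lemma periodic_shift:
  fixes G :: "real \<Rightarrow> ennreal"
  assumes G[measurable]: "G \<in> borel_measurable borel" and per: "\<And>x. G (x + 2*pi) = G x"
    and s: "0 \<le> s" "s \<le> 2*pi"
  shows "(\<integral>\<^sup>+\<theta>\<in>{0..2*pi}. G (\<theta> + s) \<partial>lborel) = (\<integral>\<^sup>+\<theta>\<in>{0..2*pi}. G \<theta> \<partial>lborel)"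
proof -
  have tr: "(\<integral>\<^sup>+x. H x \<partial>lborel) = (\<integral>\<^sup>+x. H (x + t) \<partial>lborel)" if [measurable]: "H \<in> borel_measurable borel" for H :: "real \<Rightarrow> ennreal" and t
    using nn_integral_real_affine[OF that, of 1 t] by (simp add: add.commute)
  have "(\<integral>\<^sup>+\<theta>\<in>{0..2*pi}. G (\<theta> + s) \<partial>lborel) = (\<integral>\<^sup>+x. G x * indicator {s..2*pi+s} x \<partial>lborel)"
    by (subst tr[of _ s]) (auto intro!: nn_integral_cong split: split_indicator)
  also have "\<dots> = (\<integral>\<^sup>+x. G x * indicator {s..2*pi} x + G x * indicator {2*pi<..2*pi+s} x \<partial>lborel)"
    using s by (intro nn_integral_cong) (auto split: split_indicator)
  also have "\<dots> = (\<integral>\<^sup>+x. G x * indicator {s..2*pi} x \<partial>lborel) + (\<integral>\<^sup>+x. G x * indicator {2*pi<..2*pi+s} x \<partial>lborel)"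
    by (rule nn_integral_add) auto
  also have "(\<integral>\<^sup>+x. G x * indicator {2*pi<..2*pi+s} x \<partial>lborel) = (\<integral>\<^sup>+x. G x * indicator {0<..s} x \<partial>lborel)"
    by (subst tr[of _ "2*pi"]) (auto simp: per intro!: nn_integral_cong split: split_indicator)
  also have "\<dots> = (\<integral>\<^sup>+x. G x * indicator {0..<s} x \<partial>lborel)"
  proof (rule nn_integral_cong_AE)
    show "AE x in lborel. G x * indicator {0<..s} x = G x * indicator {0..<s} x"
      using AE_lborel_singleton[of 0] AE_lborel_singleton[of s]
      by eventually_elim (auto split: split_indicator)
  qed
  also have "(\<integral>\<^sup>+x. G x * indicator {s..2*pi} x \<partial>lborel) + (\<integral>\<^sup>+x. G x * indicator {0..<s} x \<partial>lborel)
      = (\<integral>\<^sup>+x. G x * indicator {s..2*pi} x + G x * indicator {0..<s} x \<partial>lborel)"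
    by (rule nn_integral_add[symmetric]) auto
  also have "\<dots> = (\<integral>\<^sup>+\<theta>\<in>{0..2*pi}. G \<theta> \<partial>lborel)"
    using s by (intro nn_integral_cong) (auto split: split_indicator)
  finally show ?thesis .
qed



lemma poisson_meas:
  assumes "circle_measure \<mu>"
  shows "poisson \<mu> \<in> borel_measurable borel"
proof -
  have sets: "sets \<mu> = sets borel" and fin: "finite_measure \<mu>"
    using assms unfolding circle_measure_def by auto
  interpret finite_measure \<mu> by (rule fin)
  have "(\<lambda>(w::complex, \<zeta>::complex). ennreal ((1 - (cmod w)\<^sup>2) / (cmod (w - \<zeta>))\<^sup>2)) \<in> borel_measurable (borel \<Otimes>\<^sub>M borel)"
    by measurable
  then have "(\<lambda>(w::complex, \<zeta>::complex). ennreal ((1 - (cmod w)\<^sup>2) / (cmod (w - \<zeta>))\<^sup>2)) \<in> borel_measurable (borel \<Otimes>\<^sub>M \<mu>)"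
    by (subst measurable_cong_sets[OF sets_pair_measure_cong[OF refl sets] refl])
  from borel_measurable_nn_integral[OF this] show ?thesis
    unfolding poisson_def[abs_def] by simp
qed

lemma term_shift:
  fixes D :: "complex \<Rightarrow> complex \<Rightarrow> complex"
  assumes D[measurable]: "(\<lambda>p. D (fst p) (snd p)) \<in> borel_measurable borel"
    and mu: "circle_measure \<mu>" and s: "0 \<le> s" "s \<le> 2*pi"
  shows "circle_int (\<lambda>\<theta>. disc_int (\<lambda>z. ennreal ((cmod (D (cis s * (complex_of_real r * cis \<theta>)) z))\<^sup>2) * poisson \<mu> z))
       = circle_int (\<lambda>\<theta>. disc_int (\<lambda>z. ennreal ((cmod (D (complex_of_real r * cis \<theta>) z))\<^sup>2) * poisson \<mu> z))"
proof -
  define G where "G \<theta> = disc_int (\<lambda>z. ennreal ((cmod (D (complex_of_real r * cis \<theta>) z))\<^sup>2) * poisson \<mu> z)" for \<theta>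
  have P[measurable]: "poisson \<mu> \<in> borel_measurable borel" by (rule poisson_meas[OF mu])
  have D2[measurable]: "(\<lambda>(x,y). D x y) \<in> borel_measurable (borel \<Otimes>\<^sub>M borel)"
    using D by (simp add: case_prod_beta' borel_prod)
  have "(\<lambda>(\<theta>::real, z::complex). ennreal ((cmod (D (complex_of_real r * cis \<theta>) z))\<^sup>2) * poisson \<mu> z * indicator (ball 0 1) z)
     \<in> borel_measurable (borel \<Otimes>\<^sub>M lborel)"
  proof -
    have [measurable]: "cis \<in> borel_measurable borel"
      by (intro borel_measurable_continuous_onI continuous_intros)
    have [measurable]: "ball (0::complex) 1 \<in> sets borel" by simp
    have "(\<lambda>(\<theta>::real, z::complex). ennreal ((cmod (D (complex_of_real r * cis \<theta>) z))\<^sup>2) * poisson \<mu> z * indicator (ball 0 1) z)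
     \<in> borel_measurable (borel \<Otimes>\<^sub>M borel)" by measurable
    then show ?thesis
      by (subst measurable_cong_sets[OF sets_pair_measure_cong[OF refl sets_lborel] refl])
  qed
  from lborel.borel_measurable_nn_integral[OF this]
  have Gm[measurable]: "G \<in> borel_measurable borel"
    unfolding G_def[abs_def] disc_int_def by simp
  have per: "G (x + 2*pi) = G x" for x
  proof -
    have "cis (x + 2*pi) = cis x" by (simp add: complex_eq_iff)
    then show ?thesis unfolding G_def by simp
  qed
  have eq: "cis s * (complex_of_real r * cis \<theta>) = complex_of_real r * cis (\<theta> + s)" for \<theta>
    by (simp add: cis_mult[symmetric] algebra_simps add.commute)
  show ?thesis
    unfolding eq unfolding G_def[symmetric] circle_int_def
    using periodic_shift[OF Gm per s] by simp
qed



lemma deriv_2mono: "deriv (\<lambda>w. \<alpha> * w^p + \<beta> * w^q) z = \<alpha> * of_nat p * z^(p-1) + \<beta> * of_nat q * z^(q-1)"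
  by (rule DERIV_imp_deriv) (auto intro!: derivative_eq_intros)

definition hh :: "nat \<Rightarrow> nat \<Rightarrow> nat \<Rightarrow> nat \<Rightarrow> complex \<Rightarrow> complex \<Rightarrow> complex \<Rightarrow> fun2" where
  "hh a1 a2 b1 b2 c d l = (\<lambda>z w. z^a1 * (w^a2 * c) + l * (z^b1 * (w^b2 * d)))"

lemma d1_hh: "d1 (hh a1 a2 b1 b2 c d l) z1 z2 =
   (z2^a2*c) * of_nat a1 * z1^(a1-1) + (l*(z2^b2*d)) * of_nat b1 * z1^(b1-1)"
proof -
  have "(\<lambda>z. hh a1 a2 b1 b2 c d l z z2) = (\<lambda>z. (z2^a2*c) * z^a1 + (l*(z2^b2*d)) * z^b1)"
    by (rule ext) (simp add: hh_def algebra_simps)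
  then show ?thesis unfolding d1_def by (simp add: deriv_2mono)
qed

lemma d2_hh: "d2 (hh a1 a2 b1 b2 c d l) z1 z2 =
   (z1^a1*c) * of_nat a2 * z2^(a2-1) + (l*(z1^b1*d)) * of_nat b2 * z2^(b2-1)"
proof -
  have "(\<lambda>w. hh a1 a2 b1 b2 c d l z1 w) = (\<lambda>w. (z1^a1*c) * w^a2 + (l*(z1^b1*d)) * w^b2)"
    by (rule ext) (simp add: hh_def algebra_simps)
  then show ?thesis unfolding d2_def by (simp add: deriv_2mono)
qed

lemma d1_meas: "(\<lambda>p. d1 (hh a1 a2 b1 b2 c d l) (snd p) (fst p)) \<in> borel_measurable borel"
  unfolding d1_hh by (intro borel_measurable_continuous_onI continuous_intros)

lemma d2_meas: "(\<lambda>p. d2 (hh a1 a2 b1 b2 c d l) (fst p) (snd p)) \<in> borel_measurable borel"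
  unfolding d2_hh by (intro borel_measurable_continuous_onI continuous_intros)

lemma cis_pow_pi: "b > 0 \<Longrightarrow> cis (pi / real b) ^ b = -1"
  by (simp add: Complex.DeMoivre)

lemma dirichlet_eq:
  assumes cond: "(a1 = 0 \<and> b1 \<noteq> 0) \<or> (a2 = 0 \<and> b2 \<noteq> 0)"
    and m1: "circle_measure \<mu>1" and m2: "circle_measure \<mu>2"
  shows "dirichlet \<mu>1 \<mu>2 (hh a1 a2 b1 b2 c d (-l)) = dirichlet \<mu>1 \<mu>2 (hh a1 a2 b1 b2 c d l)"
  using cond
proof
  assume A: "a1 = 0 \<and> b1 \<noteq> 0"
  define s where "s = pi / real b1"
  have s: "0 \<le> s" "s \<le> 2*pi" using A by (auto simp: s_def field_simps)
  have t1: "cmod (d1 (hh a1 a2 b1 b2 c d (-l)) z1 z2) = cmod (d1 (hh a1 a2 b1 b2 c d l) z1 z2)" for z1 z2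
    using A by (simp add: d1_hh norm_minus_commute)
  have t2: "d2 (hh a1 a2 b1 b2 c d (-l)) z1 z2 = d2 (hh a1 a2 b1 b2 c d l) (cis s * z1) z2" for z1 z2
    using A by (simp add: d2_hh s_def power_mult_distrib cis_pow_pi)
  have t2': "circle_int (\<lambda>\<theta>. disc_int (\<lambda>z2. ennreal ((cmod (d2 (hh a1 a2 b1 b2 c d (-l)) (complex_of_real r * cis \<theta>) z2))\<^sup>2) * poisson \<mu>2 z2))
     = circle_int (\<lambda>\<theta>. disc_int (\<lambda>z2. ennreal ((cmod (d2 (hh a1 a2 b1 b2 c d l) (complex_of_real r * cis \<theta>) z2))\<^sup>2) * poisson \<mu>2 z2))" for r
    unfolding t2 by (rule term_shift[OF d2_meas m2 s])
  show ?thesis unfolding dirichlet_def t1 t2' ..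
next
  assume A: "a2 = 0 \<and> b2 \<noteq> 0"
  define s where "s = pi / real b2"
  have s: "0 \<le> s" "s \<le> 2*pi" using A by (auto simp: s_def field_simps)
  have t2: "cmod (d2 (hh a1 a2 b1 b2 c d (-l)) z1 z2) = cmod (d2 (hh a1 a2 b1 b2 c d l) z1 z2)" for z1 z2
    using A by (simp add: d2_hh norm_minus_commute)
  have t1: "d1 (hh a1 a2 b1 b2 c d (-l)) z1 z2 = d1 (hh a1 a2 b1 b2 c d l) z1 (cis s * z2)" for z1 z2
    using A by (simp add: d1_hh s_def power_mult_distrib cis_pow_pi)
  have t1': "circle_int (\<lambda>\<theta>. disc_int (\<lambda>z1. ennreal ((cmod (d1 (hh a1 a2 b1 b2 c d (-l)) z1 (complex_of_real r * cis \<theta>)))\<^sup>2) * poisson \<mu>1 z1))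
     = circle_int (\<lambda>\<theta>. disc_int (\<lambda>z1. ennreal ((cmod (d1 (hh a1 a2 b1 b2 c d l) z1 (complex_of_real r * cis \<theta>)))\<^sup>2) * poisson \<mu>1 z1))" for r
    unfolding t1 by (rule term_shift[where D="\<lambda>x z. d1 (hh a1 a2 b1 b2 c d l) z x", OF d1_meas m1 s])
  show ?thesis unfolding dirichlet_def t2 t1' ..
qed

lemma H2_eq:
  assumes ne: "(a1, a2) \<noteq> (b1, b2)"
  shows "H2_normsq (hh a1 a2 b1 b2 c d (-l)) = H2_normsq (hh a1 a2 b1 b2 c d l)"
  unfolding H2_normsq_def hh_def taylor_h
  using ne by (intro nn_integral_cong) auto



lemma Mz2_pow: "(Mz2 ^^ a2) (\<lambda>z1 z2. c) = (\<lambda>z1 z2. z2^a2 * c)"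
  by (induction a2) (auto simp: Mz2_def mult.assoc)

lemma Mz1_pow: "(Mz1 ^^ a1) g = (\<lambda>z1 z2. z1^a1 * g z1 z2)"
  by (induction a1) (auto simp: Mz1_def mult.assoc)

lemma Mz_pow: "(Mz1 ^^ a1) ((Mz2 ^^ a2) (\<lambda>z1 z2. c)) = (\<lambda>z1 z2. z1^a1 * (z2^a2 * c))"
  by (simp add: Mz1_pow Mz2_pow)

lemma const_in_D:
  shows "(\<lambda>z1 z2. c) \<in> Dspace \<mu>1 \<mu>2"
proof -
  have holo: "holo_bidisc (\<lambda>z1 z2. c)"
    unfolding holo_bidisc_def
    by (auto intro!: exI[of _ 0] has_derivative_const)
  have d1: "d1 (\<lambda>z1 z2. c) = (\<lambda>z1 z2. 0)" and d2: "d2 (\<lambda>z1 z2. c) = (\<lambda>z1 z2. 0)"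
    by (auto simp: d1_def d2_def fun_eq_iff)
  have dir: "dirichlet \<mu>1 \<mu>2 (\<lambda>z1 z2. c) = 0"
    unfolding dirichlet_def d1 d2 by (simp add: disc_int_def circle_int_def)
  have cst: "(\<lambda>z1 z2. c) = hh 0 0 0 0 c 0 0" by (simp add: hh_def)
  have "H2_normsq (\<lambda>z1 z2. c) = (\<integral>\<^sup>+ mn. ennreal ((cmod c)\<^sup>2) * indicator {(0::nat,0::nat)} mn \<partial>count_space UNIV)"
    unfolding cst H2_normsq_def hh_def taylor_h
    by (rule nn_integral_cong) (auto split: split_indicator)
  also have "\<dots> = ennreal ((cmod c)\<^sup>2)" by simp
  finally have "H2_normsq (\<lambda>z1 z2. c) < \<infinity>" by simp
  with holo dir show ?thesis unfolding Dspace_def by simp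
qed

lemma Dnorm_eq:
  assumes cond: "(a1 = 0 \<and> b1 \<noteq> 0) \<or> (a2 = 0 \<and> b2 \<noteq> 0)"
    and m1: "circle_measure \<mu>1" and m2: "circle_measure \<mu>2"
  shows "D_normsq \<mu>1 \<mu>2 (hh a1 a2 b1 b2 c d (-l)) = D_normsq \<mu>1 \<mu>2 (hh a1 a2 b1 b2 c d l)"
proof -
  have "(a1, a2) \<noteq> (b1, b2)" using cond by auto
  then show ?thesis unfolding D_normsq_def
    using H2_eq dirichlet_eq[OF cond m1 m2] by metis
qed

theorem corollary3p12:
  assumes "circle_measure \<mu>1" and "circle_measure \<mu>2"
  shows "range (\<lambda>c::complex. (\<lambda>z1 z2. c)) \<subseteq> Dspace \<mu>1 \<mu>2
       \<and> wandering (D_inner \<mu>1 \<mu>2) Mz1 Mz2 (range (\<lambda>c::complex. (\<lambda>z1 z2. c)))"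
proof
  show "range (\<lambda>c::complex. (\<lambda>z1 z2. c)) \<subseteq> Dspace \<mu>1 \<mu>2"
    using const_in_D by blast
  show "wandering (D_inner \<mu>1 \<mu>2) Mz1 Mz2 (range (\<lambda>c::complex. (\<lambda>z1 z2. c)))"
    unfolding wandering_def
  proof (intro allI impI ballI)
    fix a1 a2 b1 b2 :: nat and f g :: fun2
    assume cond: "(a1 = 0 \<and> b1 \<noteq> 0) \<or> (a2 = 0 \<and> b2 \<noteq> 0)"
      and f: "f \<in> range (\<lambda>c::complex. (\<lambda>z1 z2. c))" and g: "g \<in> range (\<lambda>c::complex. (\<lambda>z1 z2. c))"
    obtain c d where fc: "f = (\<lambda>z1 z2. c)" and gd: "g = (\<lambda>z1 z2. d)" using f g by blast
    have eq: "(\<lambda>z w. z^a1 * (w^a2 * c) + l * (z^b1 * (w^b2 * d))) = hh a1 a2 b1 b2 c d l" for l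
      by (simp add: hh_def)
    note N = Dnorm_eq[OF cond assms, of c d]
    have N2: "D_normsq \<mu>1 \<mu>2 (hh a1 a2 b1 b2 c d (-1)) = D_normsq \<mu>1 \<mu>2 (hh a1 a2 b1 b2 c d 1)"
      by (rule N)
    have N3: "D_normsq \<mu>1 \<mu>2 (hh a1 a2 b1 b2 c d (-\<i>)) = D_normsq \<mu>1 \<mu>2 (hh a1 a2 b1 b2 c d \<i>)"
      by (rule N)
    show "D_inner \<mu>1 \<mu>2 ((Mz1 ^^ a1) ((Mz2 ^^ a2) f)) ((Mz1 ^^ b1) ((Mz2 ^^ b2) g)) = 0"
      unfolding fc gd Mz_pow D_inner_def eq
      by (simp add: eval_nat_numeral N2 N3)
  qed
qed

end
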